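(* Let $R$ be a dp-minimal integral domain with maximal ideal $\mathfrak M$ and fraction field $K$. (1) If $\mathcal O$ is a local overring of $R$ that is non-dominant (i.e. $\mathfrak M\not\subseteq\mathfrak m$, where $\mathfrak m$ is the maximal ideal of $\mathcal O$), then $\mathcal O$ is a valuation ring and $\mathcal O=R_{\mathfrak p}$ for some prime ideal $\mathfrak p\neq\mathfrak M$ of $R$. (2) Let $\mathcal O\supseteq R$ be a valuation overring with maximal ideal $\mathfrak m$ which dominates $R$ (i.e. $\mathfrak M\subseteq\mathfrak m$), and assume the structure $(K;R,\mathcal O)$ (the field $K$ with unary predicates for $R$ and $\mathcal O$) is dp-minimal. Then $\mathcal O\subseteq R_{\mathfrak p}$ for every prime ideal $\mathfrak p\neq\mathfrak M$ of $R$. Furthermore every prime ideal $\mathfrak p\neq \mathfrak M$ of $R$ is a prime ideal of $\mathcal O$, and every prime ideal of $\mathcal O$ strictly contained in $\mathfrak M$ is a prime ideal of $R$; i.e. $\mathrm{Spec}(R)\setminus\{\mathfrak M\}$ is an initial segment of $\mathrm{Spec}(\mathcal O)\setminus\{\mathfrak m\}$.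
   Context: Rings are commutative with identity; dp-minimal means the theory has dp-rank $1$ (a dp-minimal domain is local). An overring of $R$ is a ring $S$ with $R\subseteq S\subseteq\mathrm{Frac}(R)$. Prime spectra of $R$ and $\mathcal O$ are linearly ordered by inclusion. *)

theory Defs
  imports Main
begin

definition subring :: "'a::field set \<Rightarrow> bool" where
  "subring S \<longleftrightarrow> 0 \<in> S \<and> 1 \<in> S \<and> (\<forall>x\<in>S. \<forall>y\<in>S. x + y \<in> S \<and> x - y \<in> S \<and> x * y \<in> S)"

definition ideal_of :: "'a::field set \<Rightarrow> 'a set \<Rightarrow> bool" where
  "ideal_of S I \<longleftrightarrow> I \<subseteq> S \<and> 0 \<in> I \<and> (\<forall>x\<in>I. \<forall>y\<in>I. x + y \<in> I)
     \<and> (\<forall>s\<in>S. \<forall>x\<in>I. s * x \<in> I)"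

definition prime_ideal_of :: "'a::field set \<Rightarrow> 'a set \<Rightarrow> bool" where
  "prime_ideal_of S P \<longleftrightarrow> ideal_of S P \<and> P \<noteq> S \<and>
     (\<forall>a\<in>S. \<forall>b\<in>S. a * b \<in> P \<longrightarrow> a \<in> P \<or> b \<in> P)"

text \<open>Non-units of a subring; for a local ring this is its (unique) maximal ideal.\<close>
definition nonunits :: "'a::field set \<Rightarrow> 'a set" where
  "nonunits S = {x \<in> S. \<not> (\<exists>y\<in>S. x * y = 1)}"

definition is_local :: "'a::field set \<Rightarrow> bool" where
  "is_local S \<longleftrightarrow> ideal_of S (nonunits S)"

definition fraction_field_is :: "'a::field set \<Rightarrow> bool" where
  "fraction_field_is S \<longleftrightarrow> (\<forall>x. \<exists>a\<in>S. \<exists>b\<in>S. b \<noteq> 0 \<and> x = a / b)"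

definition valuation_ring :: "'a::field set \<Rightarrow> bool" where
  "valuation_ring V \<longleftrightarrow> subring V \<and> (\<forall>x. x \<noteq> 0 \<longrightarrow> x \<in> V \<or> inverse x \<in> V)"

definition localization :: "'a::field set \<Rightarrow> 'a set \<Rightarrow> 'a set" where
  "localization S P = {a / s | a s. a \<in> S \<and> s \<in> S \<and> s \<notin> P}"

datatype tm = Var nat | Zero | One | Add tm tm | Minus tm | Mul tm tm

datatype fm = Eq tm tm | Pred nat tm | Not fm | Conj fm fm | Ex nat fm

primrec evt :: "(nat \<Rightarrow> 'a::comm_ring_1) \<Rightarrow> tm \<Rightarrow> 'a" where
  "evt v (Var n) = v n"
| "evt v Zero = 0"
| "evt v One = 1"
| "evt v (Add s t) = evt v s + evt v t"
| "evt v (Minus s) = - evt v s"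
| "evt v (Mul s t) = evt v s * evt v t"

text \<open>Satisfaction in the structure with universe D (closed under the ring
  operations), unary predicates P k, under the valuation v.\<close>
primrec sat :: "'a::comm_ring_1 set \<Rightarrow> (nat \<Rightarrow> 'a set) \<Rightarrow> (nat \<Rightarrow> 'a) \<Rightarrow> fm \<Rightarrow> bool" where
  "sat D P v (Eq s t) = (evt v s = evt v t)"
| "sat D P v (Pred k t) = (evt v t \<in> P k)"
| "sat D P v (Not f) = (\<not> sat D P v f)"
| "sat D P v (Conj f g) = (sat D P v f \<and> sat D P v g)"
| "sat D P v (Ex n f) = (\<exists>c\<in>D. sat D P (v(n := c)) f)"

text \<open>dp-minimality (dp-rank 1): there is no ict-pattern of depth 2 in one variable.
  Variable 0 is the object variable x, all other variables are parameters.
  By compactness, an ict-pattern exists in a monster model of the complete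
  theory iff for every n there are finite patterns of size n in the structure itself.\<close>
definition dp_minimal :: "'a::comm_ring_1 set \<Rightarrow> (nat \<Rightarrow> 'a set) \<Rightarrow> bool" where
  "dp_minimal D P \<longleftrightarrow> \<not> (\<exists>\<phi> \<psi>. \<forall>n::nat. \<exists>a b :: nat \<Rightarrow> nat \<Rightarrow> 'a.
      (\<forall>i<n. \<forall>k. a i k \<in> D) \<and> (\<forall>j<n. \<forall>k. b j k \<in> D) \<and>
      (\<forall>i<n. \<forall>j<n. \<exists>c\<in>D.
          (\<forall>i'<n. sat D P ((a i')(0 := c)) \<phi> \<longleftrightarrow> i' = i) \<and>
          (\<forall>j'<n. sat D P ((b j')(0 := c)) \<psi> \<longleftrightarrow> j' = j)))"

end

theory Submission imports Defs begin

lemma sub_basic: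
  assumes "subring S"
  shows "0 \<in> S" "1 \<in> S" "x\<in>S \<Longrightarrow> y\<in>S \<Longrightarrow> x+y \<in> S" "x\<in>S \<Longrightarrow> y\<in>S \<Longrightarrow> x-y\<in>S"
    "x\<in>S \<Longrightarrow> y\<in>S \<Longrightarrow> x*y\<in>S"
  using assms unfolding subring_def by auto

lemma sub_neg: "subring S \<Longrightarrow> x \<in> S \<Longrightarrow> -x \<in> S"
  using sub_basic(1)[of S] sub_basic(4)[of S 0 x] by simp

lemma sub_pow: "subring S \<Longrightarrow> t \<in> S \<Longrightarrow> t^k \<in> S"
  by (induction k) (auto intro: sub_basic)

lemma one_not_nonunit: "subring S \<Longrightarrow> 1 \<notin> nonunits S"
  unfolding nonunits_def using sub_basic(2) by fastforce

lemma one_minus_unit: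
  assumes sR: "subring R" and loc: "is_local R" and t: "t \<in> nonunits R" and j: "0 < j"
  shows "\<exists>u\<in>R. (1 - t^j)*u = 1"
proof -
  have I: "ideal_of R (nonunits R)" using loc is_local_def by blast
  have tR: "t \<in> R" using t nonunits_def by blast
  have "t^j = t^(j-1) * t" using j by (metis One_nat_def Suc_pred power_Suc2)
  moreover have "t^(j-1) \<in> R" using sub_pow[OF sR tR] .
  ultimately have tj: "t^j \<in> nonunits R" using I t unfolding ideal_of_def by auto
  have tjR: "t^j \<in> R" using sub_pow[OF sR tR] .
  have omR: "1 - t^j \<in> R" using sub_basic[OF sR] tjR by blast
  show ?thesis
  proof (rule ccontr)
    assume "\<not> ?thesis"
    then have "1 - t^j \<in> nonunits R" using omR unfolding nonunits_def by blast
    then have "(1 - t^j) + t^j \<in> nonunits R" using I tj unfolding ideal_of_def by blast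
    then show False using one_not_nonunit[OF sR] by simp
  qed
qed

lemma pow_diff_cancel1:
  assumes sR: "subring R" and loc: "is_local R" and t: "t \<in> nonunits R"
    and mul: "\<And>e r. e \<in> S \<Longrightarrow> r \<in> R \<Longrightarrow> e * r \<in> S"
    and lt: "i < i'" and d: "f*t^i - f*t^i' \<in> S"
  shows "f * t^i \<in> S"
proof -
  obtain u where u: "u \<in> R" "(1 - t^(i'-i))*u = 1" using one_minus_unit[OF sR loc t, of "i'-i"] lt by auto
  have "t^i' = t^i * t^(i'-i)" using lt by (simp add: power_add[symmetric])
  then have "f*t^i - f*t^i' = f*t^i*(1 - t^(i'-i))" by (simp add: algebra_simps)
  then have "(f*t^i - f*t^i') * u = f * t^i" using u(2) by (metis mult.assoc mult_1_right)
  then show ?thesis using mul[OF d u(1)] by simp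
qed

lemma pow_diff_cancel:
  assumes sR: "subring R" and loc: "is_local R" and t: "t \<in> nonunits R"
    and neg: "\<And>e. e \<in> S \<Longrightarrow> -e \<in> S"
    and mul: "\<And>e r. e \<in> S \<Longrightarrow> r \<in> R \<Longrightarrow> e * r \<in> S"
    and ne: "i \<noteq> i'" and d: "f*t^i - f*t^i' \<in> S"
  shows "f * t^(min i i') \<in> S"
proof (cases "i < i'")
  case True
  then show ?thesis using pow_diff_cancel1[OF sR loc t mul True d] by simp
next
  case False
  then have lt: "i' < i" using ne by simp
  have "f*t^i' - f*t^i \<in> S" using neg[OF d] by simp
  then show ?thesis using pow_diff_cancel1[OF sR loc t mul lt] lt by simp
qed

lemma prime_pow_notin:
  assumes "prime_ideal_of R p" "subring R" "t \<in> R" "t \<notin> p"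
  shows "t^k \<notin> p"
proof (induction k)
  case 0
  have "1 \<notin> p"
  proof
    assume "1 \<in> p"
    then have "\<forall>s\<in>R. s * 1 \<in> p" using assms(1) unfolding prime_ideal_of_def ideal_of_def by blast
    then have "R \<subseteq> p" by auto
    then show False using assms(1) unfolding prime_ideal_of_def ideal_of_def by blast
  qed
  then show ?case by simp
next
  case (Suc k)
  then show ?case using assms sub_pow[OF assms(2) assms(3), of k]
    unfolding prime_ideal_of_def by (metis power_Suc)
qed

lemma prime_one_notin: "prime_ideal_of R p \<Longrightarrow> subring R \<Longrightarrow> 1 \<notin> p"
  using prime_pow_notin[of R p 1 0] sub_basic(2) unfolding prime_ideal_of_def ideal_of_def
  by (metis mult_1_right power_0 subset_antisym subsetI)

lemma prime_sub_nonunits: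
  assumes "prime_ideal_of R p" "subring R"
  shows "p \<subseteq> nonunits R"
proof
  fix x assume x: "x \<in> p"
  have xR: "x \<in> R" using x assms(1) unfolding prime_ideal_of_def ideal_of_def by blast
  show "x \<in> nonunits R"
  proof (rule ccontr)
    assume "x \<notin> nonunits R"
    then obtain y where y: "y \<in> R" "x*y = 1" using xR nonunits_def by blast
    then have "y * x \<in> p" using x assms(1) unfolding prime_ideal_of_def ideal_of_def by blast
    then have "1 \<in> p" using y by (simp add: mult.commute)
    then show False using prime_one_notin assms by blast
  qed
qed

lemma nonunit_mult:
  assumes "subring V" "t \<in> nonunits V" "a \<in> V" "w \<in> V" "t*a*w = 1"
  shows False
proof -
  have "a * w \<in> V" using sub_basic(5)[OF assms(1) assms(3) assms(4)] .
  moreover have "t * (a * w) = 1" using assms(5) by (simp add: mult.assoc)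
  ultimately show False using assms(2) unfolding nonunits_def by blast
qed


lemma engineV:
  fixes R V :: "'K::field set"
  assumes sR: "subring R" and loc: "is_local R" and RV: "R \<subseteq> V" and sV: "subring V"
    and t: "t \<in> nonunits R"
    and dp: "dp_minimal UNIV (\<lambda>k. if k = 0 then R else if k = 1 then V else {})"
    and hy: "\<And>n. \<exists>y. y \<noteq> 0 \<and> (\<forall>k<n. y * t^k \<notin> R) \<and> (\<forall>k<n. inverse y * t^k \<notin> V)"
  shows False
proof -
  define P where "P = (\<lambda>k::nat. if k = 0 then R else if k = 1 then V else {})"
  define \<phi> where "\<phi> = Pred 0 (Add (Var 0) (Minus (Var 1)))"
  define \<psi> where "\<psi> = Pred 1 (Mul (Add (Var 0) (Minus (Var 1))) (Var 2))"
  have tR: "t \<in> R" using t nonunits_def by blast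
  have negR: "\<And>e. e \<in> R \<Longrightarrow> -e \<in> R" using sub_neg[OF sR] .
  have mulR: "\<And>e r. e \<in> R \<Longrightarrow> r \<in> R \<Longrightarrow> e * r \<in> R" using sub_basic(5)[OF sR] .
  have negV: "\<And>e. e \<in> V \<Longrightarrow> -e \<in> V" using sub_neg[OF sV] .
  have mulV: "\<And>e r. e \<in> V \<Longrightarrow> r \<in> R \<Longrightarrow> e * r \<in> V" using sub_basic(5)[OF sV] RV by blast
  have key: "\<forall>n. \<exists>a b :: nat \<Rightarrow> nat \<Rightarrow> 'K. (\<forall>i<n. \<forall>k. a i k \<in> UNIV) \<and> (\<forall>j<n. \<forall>k. b j k \<in> UNIV) \<and>
      (\<forall>i<n. \<forall>j<n. \<exists>c\<in>UNIV.
          (\<forall>i'<n. sat UNIV P ((a i')(0 := c)) \<phi> \<longleftrightarrow> i' = i) \<and>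
          (\<forall>j'<n. sat UNIV P ((b j')(0 := c)) \<psi> \<longleftrightarrow> j' = j))"
  proof
    fix n
    obtain y where y: "y \<noteq> 0" "\<forall>k<n. y * t^k \<notin> R" "\<forall>k<n. inverse y * t^k \<notin> V"
      using hy by blast
    define a where "a = (\<lambda>i::nat. \<lambda>k::nat. y * t^i)"
    define b where "b = (\<lambda>j::nat. \<lambda>k::nat. if k = 1 then t^j else inverse y)"
    have "\<forall>i<n. \<forall>j<n. \<exists>c\<in>UNIV.
          (\<forall>i'<n. sat UNIV P ((a i')(0 := c)) \<phi> \<longleftrightarrow> i' = i) \<and>
          (\<forall>j'<n. sat UNIV P ((b j')(0 := c)) \<psi> \<longleftrightarrow> j' = j)"
    proof (intro allI impI)
      fix i j assume ij: "i < n" "j < n"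
      define c where "c = y*t^i + t^j"
      have A: "\<forall>i'<n. sat UNIV P ((a i')(0 := c)) \<phi> \<longleftrightarrow> i' = i"
      proof (intro allI impI)
        fix i' assume i': "i' < n"
        have "sat UNIV P ((a i')(0 := c)) \<phi> \<longleftrightarrow> c + - (y*t^i') \<in> R"
          by (simp add: \<phi>_def P_def a_def)
        also have "\<dots> \<longleftrightarrow> i' = i"
        proof
          assume h: "c + - (y*t^i') \<in> R"
          show "i' = i"
          proof (rule ccontr)
            assume ne: "i' \<noteq> i"
            have "(c + - (y*t^i')) - t^j \<in> R" by (rule sub_basic(4)[OF sR h sub_pow[OF sR tR]])
            then have dd: "y*t^i - y*t^i' \<in> R" by (simp add: c_def)
            have "y * t^(min i i') \<in> R"
              using pow_diff_cancel[OF sR loc t negR mulR _ dd] ne by simp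
            moreover have "min i i' < n" using ij i' by simp
            ultimately show False using y(2) by blast
          qed
        next
          assume "i' = i"
          then show "c + - (y*t^i') \<in> R" using c_def sub_pow[OF sR tR] by simp
        qed
        finally show "sat UNIV P ((a i')(0 := c)) \<phi> \<longleftrightarrow> i' = i" .
      qed
      have B: "\<forall>j'<n. sat UNIV P ((b j')(0 := c)) \<psi> \<longleftrightarrow> j' = j"
      proof (intro allI impI)
        fix j' assume j': "j' < n"
        have "sat UNIV P ((b j')(0 := c)) \<psi> \<longleftrightarrow> (c + - (t^j')) * inverse y \<in> V"
          by (simp add: \<psi>_def P_def b_def)
        also have "(c + - (t^j')) * inverse y = t^i + (inverse y * t^j - inverse y * t^j')"
        proof -
          have "(c + - (t^j')) * inverse y = (y * inverse y) * t^i + (inverse y * t^j - inverse y * t^j')"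
            unfolding c_def by (simp add: algebra_simps)
          also have "y * inverse y = 1" using y(1) by simp
          finally show ?thesis by simp
        qed
        also have "\<dots> \<in> V \<longleftrightarrow> j' = j"
        proof
          assume h: "t^i + (inverse y * t^j - inverse y * t^j') \<in> V"
          show "j' = j"
          proof (rule ccontr)
            assume ne: "j' \<noteq> j"
            have tiV: "t^i \<in> V" using sub_pow[OF sR tR] RV by blast
            have "(t^i + (inverse y * t^j - inverse y * t^j')) - t^i \<in> V"
              by (rule sub_basic(4)[OF sV h tiV])
            then have dd: "inverse y * t^j - inverse y * t^j' \<in> V" by simp
            have "inverse y * t^(min j j') \<in> V"
              using pow_diff_cancel[OF sR loc t negV mulV _ dd] ne by simp
            moreover have "min j j' < n" using ij j' by simp
            ultimately show False using y(3) by blast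
          qed
        next
          assume "j' = j"
          then show "t^i + (inverse y * t^j - inverse y * t^j') \<in> V"
            using sub_pow[OF sR tR] RV by (simp add: subset_iff)
        qed
        finally show "sat UNIV P ((b j')(0 := c)) \<psi> \<longleftrightarrow> j' = j" .
      qed
      show "\<exists>c\<in>UNIV.
          (\<forall>i'<n. sat UNIV P ((a i')(0 := c)) \<phi> \<longleftrightarrow> i' = i) \<and>
          (\<forall>j'<n. sat UNIV P ((b j')(0 := c)) \<psi> \<longleftrightarrow> j' = j)" using A B by blast
    qed
    then show "\<exists>a b :: nat \<Rightarrow> nat \<Rightarrow> 'K. (\<forall>i<n. \<forall>k. a i k \<in> UNIV) \<and> (\<forall>j<n. \<forall>k. b j k \<in> UNIV) \<and>
      (\<forall>i<n. \<forall>j<n. \<exists>c\<in>UNIV.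
          (\<forall>i'<n. sat UNIV P ((a i')(0 := c)) \<phi> \<longleftrightarrow> i' = i) \<and>
          (\<forall>j'<n. sat UNIV P ((b j')(0 := c)) \<psi> \<longleftrightarrow> j' = j))"
      by (intro exI[of _ a] exI[of _ b] conjI) simp_all
  qed
  then have "\<not> dp_minimal UNIV P" unfolding dp_minimal_def not_not
    by (intro exI[of _ \<phi>] exI[of _ \<psi>])
  then show False using dp by (simp add: P_def)
qed


lemma engineR_half:
  fixes R :: "'K::field set"
  assumes sR: "subring R" and loc: "is_local R" and xR: "x \<in> R" and yR: "y \<in> R"
    and s1: "s1 \<in> nonunits R" and s2: "s2 \<in> R"
    and h1: "\<forall>k. \<forall>w\<in>R. y * s1^k \<noteq> x * w"
    and i: "i < n" and i': "i' < n"
  shows "(\<exists>w\<in>R. (y * s1^i + x * s2^j) + - (y * s1^i') = x * w) \<longleftrightarrow> i' = i"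
proof -
  define S where "S = {e. \<exists>w\<in>R. e = x * w}"
  have negS: "-e \<in> S" if e: "e \<in> S" for e
  proof -
    obtain w where w: "w \<in> R" "e = x * w" using e unfolding S_def by blast
    have "-w \<in> R" using sub_neg[OF sR w(1)] .
    moreover have "-e = x * (-w)" using w(2) by simp
    ultimately show ?thesis unfolding S_def by blast
  qed
  have mulS: "e * r \<in> S" if e: "e \<in> S" and r: "r \<in> R" for e r
  proof -
    obtain w where w: "w \<in> R" "e = x * w" using e unfolding S_def by blast
    have "w * r \<in> R" using sub_basic(5)[OF sR w(1) r] .
    moreover have "e * r = x * (w * r)" using w(2) by (simp add: mult.assoc)
    ultimately show ?thesis unfolding S_def by blast
  qed
  have s1R: "s1 \<in> R" using s1 nonunits_def by blast
  show ?thesis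
  proof
    assume "\<exists>w\<in>R. (y * s1^i + x * s2^j) + - (y * s1^i') = x * w"
    then obtain w where w: "w \<in> R" "(y * s1^i + x * s2^j) + - (y * s1^i') = x * w" by blast
    show "i' = i"
    proof (rule ccontr)
      assume ne: "i' \<noteq> i"
      have "y*s1^i - y*s1^i' = x * (w - s2^j)" using w(2) by (simp add: algebra_simps)
      moreover have "w - s2^j \<in> R" using w(1) sub_pow[OF sR s2] sub_basic(4)[OF sR] by blast
      ultimately have dd: "y*s1^i - y*s1^i' \<in> S" unfolding S_def by blast
      have "y * s1^(min i i') \<in> S" using pow_diff_cancel[OF sR loc s1 negS mulS _ dd] ne by simp
      then show False using h1 unfolding S_def by blast
    qed
  next
    assume "i' = i"
    then show "\<exists>w\<in>R. (y * s1^i + x * s2^j) + - (y * s1^i') = x * w"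
      using sub_pow[OF sR s2] by auto
  qed
qed

lemma engineR:
  fixes R :: "'K::field set"
  assumes sR: "subring R" and loc: "is_local R" and dp: "dp_minimal R (\<lambda>_. {})"
    and xR: "x \<in> R" and yR: "y \<in> R"
    and s1: "s1 \<in> nonunits R" and s2: "s2 \<in> nonunits R"
    and h1: "\<forall>k. \<forall>w\<in>R. y * s1^k \<noteq> x * w"
    and h2: "\<forall>k. \<forall>w\<in>R. x * s2^k \<noteq> y * w"
  shows False
proof -
  define P where "P = (\<lambda>k::nat. {} :: 'K set)"
  define \<phi> where "\<phi> = Ex 3 (Eq (Add (Var 0) (Minus (Var 1))) (Mul (Var 2) (Var 3)))"
  have s1R: "s1 \<in> R" using s1 nonunits_def by blast
  have s2R: "s2 \<in> R" using s2 nonunits_def by blast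
  have key: "\<forall>n. \<exists>a b :: nat \<Rightarrow> nat \<Rightarrow> 'K. (\<forall>i<n. \<forall>k. a i k \<in> R) \<and> (\<forall>j<n. \<forall>k. b j k \<in> R) \<and>
      (\<forall>i<n. \<forall>j<n. \<exists>c\<in>R.
          (\<forall>i'<n. sat R P ((a i')(0 := c)) \<phi> \<longleftrightarrow> i' = i) \<and>
          (\<forall>j'<n. sat R P ((b j')(0 := c)) \<phi> \<longleftrightarrow> j' = j))"
  proof
    fix n
    define a where "a = (\<lambda>i::nat. \<lambda>k::nat. if k = 1 then y * s1^i else x)"
    define b where "b = (\<lambda>j::nat. \<lambda>k::nat. if k = 1 then x * s2^j else y)"
    have aR: "\<forall>i<n. \<forall>k. a i k \<in> R" unfolding a_def
      using xR sub_basic(5)[OF sR yR sub_pow[OF sR s1R]] by auto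
    have bR: "\<forall>j<n. \<forall>k. b j k \<in> R" unfolding b_def
      using yR sub_basic(5)[OF sR xR sub_pow[OF sR s2R]] by auto
    have "\<forall>i<n. \<forall>j<n. \<exists>c\<in>R.
          (\<forall>i'<n. sat R P ((a i')(0 := c)) \<phi> \<longleftrightarrow> i' = i) \<and>
          (\<forall>j'<n. sat R P ((b j')(0 := c)) \<phi> \<longleftrightarrow> j' = j)"
    proof (intro allI impI)
      fix i j assume ij: "i < n" "j < n"
      define c where "c = y * s1^i + x * s2^j"
      have cR: "c \<in> R" unfolding c_def
        using sub_basic(3,5)[OF sR] xR yR sub_pow[OF sR s1R] sub_pow[OF sR s2R] by metis
      have A: "\<forall>i'<n. sat R P ((a i')(0 := c)) \<phi> \<longleftrightarrow> i' = i"
      proof (intro allI impI)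
        fix i' assume i': "i' < n"
        have "sat R P ((a i')(0 := c)) \<phi> \<longleftrightarrow> (\<exists>w\<in>R. (y * s1^i + x * s2^j) + - (y * s1^i') = x * w)"
          by (simp add: \<phi>_def a_def c_def)
        also have "\<dots> \<longleftrightarrow> i' = i"
          using engineR_half[OF sR loc xR yR s1 s2R h1 ij(1) i'] .
        finally show "sat R P ((a i')(0 := c)) \<phi> \<longleftrightarrow> i' = i" .
      qed
      have B: "\<forall>j'<n. sat R P ((b j')(0 := c)) \<phi> \<longleftrightarrow> j' = j"
      proof (intro allI impI)
        fix j' assume j': "j' < n"
        have "sat R P ((b j')(0 := c)) \<phi> \<longleftrightarrow> (\<exists>w\<in>R. (x * s2^j + y * s1^i) + - (x * s2^j') = y * w)"
          by (simp add: \<phi>_def b_def c_def add.commute)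
        also have "\<dots> \<longleftrightarrow> j' = j"
          using engineR_half[OF sR loc yR xR s2 s1R h2 ij(2) j'] .
        finally show "sat R P ((b j')(0 := c)) \<phi> \<longleftrightarrow> j' = j" .
      qed
      show "\<exists>c\<in>R.
          (\<forall>i'<n. sat R P ((a i')(0 := c)) \<phi> \<longleftrightarrow> i' = i) \<and>
          (\<forall>j'<n. sat R P ((b j')(0 := c)) \<phi> \<longleftrightarrow> j' = j)" using A B cR by blast
    qed
    then show "\<exists>a b :: nat \<Rightarrow> nat \<Rightarrow> 'K. (\<forall>i<n. \<forall>k. a i k \<in> R) \<and> (\<forall>j<n. \<forall>k. b j k \<in> R) \<and>
      (\<forall>i<n. \<forall>j<n. \<exists>c\<in>R.
          (\<forall>i'<n. sat R P ((a i')(0 := c)) \<phi> \<longleftrightarrow> i' = i) \<and>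
          (\<forall>j'<n. sat R P ((b j')(0 := c)) \<phi> \<longleftrightarrow> j' = j))"
      using aR bR by (intro exI[of _ a] exI[of _ b] conjI) simp_all
  qed
  then have "\<not> dp_minimal R P" unfolding dp_minimal_def not_not
    by (intro exI[of _ \<phi>] exI[of _ \<phi>])
  then show False using dp by (simp add: P_def)
qed


lemma loc_iff: "z \<in> localization R p \<longleftrightarrow> (\<exists>a s. z = a / s \<and> a \<in> R \<and> s \<in> R \<and> s \<notin> p)"
  unfolding localization_def by blast

lemma zero_nonunit: "subring V \<Longrightarrow> 0 \<in> nonunits V"
  unfolding nonunits_def using sub_basic(1) by fastforce

lemma part1:
  fixes R V :: "'K::field set"
  assumes sR: "subring R" and ff: "fraction_field_is R" and dp: "dp_minimal R (\<lambda>_. {})"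
    and loc: "is_local R" and sV: "subring V" and RV: "R \<subseteq> V" and locV: "is_local V"
    and nM: "\<not> nonunits R \<subseteq> nonunits V"
  shows "valuation_ring V \<and> (\<exists>p. prime_ideal_of R p \<and> p \<noteq> nonunits R \<and> V = localization R p)"
proof -
  obtain a where a: "a \<in> nonunits R" "a \<notin> nonunits V" using nM by blast
  have aR: "a \<in> R" using a nonunits_def by blast
  have aV: "a \<in> V" using aR RV by blast
  obtain a' where a': "a' \<in> V" "a * a' = 1" using a(2) aV nonunits_def by blast
  define p where "p = nonunits V \<inter> R"
  have IV: "ideal_of V (nonunits V)" using locV is_local_def by blast
  have VL: "\<And>x y. x \<in> R \<Longrightarrow> y \<in> R \<Longrightarrow> (\<exists>k. \<exists>w\<in>R. y*a^k = x*w) \<or> (\<exists>k. \<exists>w\<in>R. x*a^k = y*w)"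
    using engineR[OF sR loc dp _ _ a(1) a(1)] by blast
  have apk: "\<And>k. a^k * a'^k = 1" using a'(2) by (metis power_mult_distrib power_one)
  have a'kV: "\<And>k. a'^k \<in> V" using sub_pow[OF sV a'(1)] .
  have divk: "\<And>w k. w / a^k = w * a'^k"
    using apk by (metis divide_inverse inverse_unique)
  have one_notp: "1 \<notin> p" using one_not_nonunit[OF sV] p_def by blast
  have apk_notp: "\<And>k. a^k \<notin> p"
    using apk a'kV unfolding p_def nonunits_def by blast
  have aR': "\<And>k. a^k \<in> R" using sub_pow[OF sR aR] .
  have locsub: "\<And>r s. r \<in> R \<Longrightarrow> s \<in> R \<Longrightarrow> s \<notin> p \<Longrightarrow> r / s \<in> V"
  proof -
    fix r s assume rs: "r \<in> R" "s \<in> R" "s \<notin> p"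
    then have "s \<notin> nonunits V" unfolding p_def by blast
    then obtain s' where s': "s' \<in> V" "s * s' = 1" using rs RV nonunits_def by blast
    then have "r / s = r * s'" by (metis divide_inverse inverse_unique)
    then show "r / s \<in> V" using sub_basic(5)[OF sV] s' rs RV by auto
  qed
  have VsubL: "V \<subseteq> localization R p"
  proof
    fix v assume vV: "v \<in> V"
    obtain x y where xy: "x \<in> R" "y \<in> R" "y \<noteq> 0" "v = x / y" using ff fraction_field_is_def by blast
    show "v \<in> localization R p"
    proof (cases "x = 0")
      case True
      then have "v = 0 / 1" using xy by simp
      then show ?thesis unfolding loc_iff using sub_basic[OF sR] one_notp by blast
    next
      case x0: False
      from VL[OF xy(1,2)] show ?thesis
      proof
        assume "\<exists>k. \<exists>w\<in>R. y*a^k = x*w"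
        then obtain k w where w: "w \<in> R" "y*a^k = x*w" by blast
        have ak0: "a^k \<noteq> 0" using apk[of k] by (metis mult_zero_left zero_neq_one)
        have w0: "w \<noteq> 0" using w(2) xy(3) ak0 by auto
        have vy: "v*y = x" using xy(3,4) by simp
        have "v*w*y = a^k*y" using w(2) vy by (metis mult.commute mult.left_commute)
        then have "v*w = a^k" using xy(3) by simp
        then have vdiv: "v = a^k / w" using w0 by (simp add: field_simps)
        show ?thesis
        proof (cases "w \<in> nonunits V")
          case False
          then have "w \<notin> p" unfolding p_def by blast
          then show ?thesis unfolding loc_iff using vdiv w(1) aR' by blast
        next
          case True
          have "w * a'^k * v = 1" using \<open>v*w = a^k\<close> apk[of k] by (metis mult.commute mult.left_commute)
          then show ?thesis using nonunit_mult[OF sV True a'kV vV] by blast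
        qed
      next
        assume "\<exists>k. \<exists>w\<in>R. x*a^k = y*w"
        then obtain k w where w: "w \<in> R" "x*a^k = y*w" by blast
        have ak0: "a^k \<noteq> 0" using apk[of k] by (metis mult_zero_left zero_neq_one)
        have vy: "v*y = x" using xy(3,4) by simp
        have "v*a^k*y = w*y" using w(2) vy by (metis mult.commute mult.left_commute)
        then have "v*a^k = w" using xy(3) by simp
        then have "v = w / a^k" using ak0 by (simp add: field_simps)
        then show ?thesis unfolding loc_iff using w(1) aR' apk_notp by blast
      qed
    qed
  qed
  have LsubV: "localization R p \<subseteq> V"
  proof
    fix z assume "z \<in> localization R p"
    then obtain r s where "z = r / s" "r \<in> R" "s \<in> R" "s \<notin> p" unfolding loc_iff by blast
    then show "z \<in> V" using locsub by simp
  qed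
  have val: "valuation_ring V"
    unfolding valuation_ring_def
  proof (intro conjI sV allI impI)
    fix z :: 'K assume z0: "z \<noteq> 0"
    obtain x y where xy: "x \<in> R" "y \<in> R" "y \<noteq> 0" "z = x / y" using ff fraction_field_is_def by blast
    have x0: "x \<noteq> 0" using z0 xy by auto
    from VL[OF xy(1,2)] show "z \<in> V \<or> inverse z \<in> V"
    proof
      assume "\<exists>k. \<exists>w\<in>R. y*a^k = x*w"
      then obtain k w where w: "w \<in> R" "y*a^k = x*w" by blast
      have ak0: "a^k \<noteq> 0" using apk[of k] by (metis mult_zero_left zero_neq_one)
      have zy: "z*y = x" using xy(3,4) by simp
      have "z*w*y = a^k*y" using w(2) zy by (metis mult.commute mult.left_commute)
      then have "z*w = a^k" using xy(3) by simp
      then have "inverse z = w / a^k" using ak0 z0 by (simp add: field_simps)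
      then show ?thesis using locsub[OF w(1) aR' apk_notp] by simp
    next
      assume "\<exists>k. \<exists>w\<in>R. x*a^k = y*w"
      then obtain k w where w: "w \<in> R" "x*a^k = y*w" by blast
      have ak0: "a^k \<noteq> 0" using apk[of k] by (metis mult_zero_left zero_neq_one)
      have zy: "z*y = x" using xy(3,4) by simp
      have "z*a^k*y = w*y" using w(2) zy by (metis mult.commute mult.left_commute)
      then have "z*a^k = w" using xy(3) by simp
      then have "z = w / a^k" using ak0 by (simp add: field_simps)
      then show ?thesis using locsub[OF w(1) aR' apk_notp] by simp
    qed
  qed
  have prime: "prime_ideal_of R p"
    unfolding prime_ideal_of_def ideal_of_def
  proof (intro conjI ballI impI)
    show "p \<subseteq> R" unfolding p_def by blast
    show "0 \<in> p" unfolding p_def using zero_nonunit[OF sV] sub_basic(1)[OF sR] by blast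
  next
    fix x y assume "x \<in> p" "y \<in> p"
    then show "x + y \<in> p" using IV sub_basic(3)[OF sR] unfolding p_def ideal_of_def by blast
  next
    fix s x assume "s \<in> R" "x \<in> p"
    then show "s * x \<in> p" using IV sub_basic(5)[OF sR] RV unfolding p_def ideal_of_def by blast
  next
    show "p \<noteq> R" using one_notp sub_basic(2)[OF sR] by blast
  next
    fix b c assume bc: "b \<in> R" "c \<in> R" "b * c \<in> p"
    show "b \<in> p \<or> c \<in> p"
    proof (rule ccontr)
      assume "\<not> (b \<in> p \<or> c \<in> p)"
      then obtain b' c' where "b' \<in> V" "b * b' = 1" "c' \<in> V" "c * c' = 1"
        using bc RV unfolding p_def nonunits_def by blast
      then have "b * c * 1 * (b' * c') = 1" "b'*c' \<in> V" using sub_basic(5)[OF sV]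
        by (auto simp: algebra_simps)
      moreover have "b * c \<in> nonunits V" using bc p_def by blast
      ultimately show False using nonunit_mult[OF sV, of "b*c" 1] sub_basic(2)[OF sV] by blast
    qed
  qed
  have "p \<noteq> nonunits R" using a unfolding p_def by blast
  then show ?thesis using val prime VsubL LsubV by blast
qed


lemma part2:
  fixes R V :: "'K::field set"
  assumes sR: "subring R" and loc: "is_local R"
    and vr: "valuation_ring V" and RV: "R \<subseteq> V" and Mm: "nonunits R \<subseteq> nonunits V"
    and dp2: "dp_minimal UNIV (\<lambda>k. if k = 0 then R else if k = 1 then V else {})"
  shows "(\<forall>p. prime_ideal_of R p \<and> p \<noteq> nonunits R \<longrightarrow> V \<subseteq> localization R p)
       \<and> (\<forall>p. prime_ideal_of R p \<and> p \<noteq> nonunits R \<longrightarrow> prime_ideal_of V p)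
       \<and> (\<forall>q. prime_ideal_of V q \<and> q \<subset> nonunits R \<longrightarrow> prime_ideal_of R q)"
proof -
  have sV: "subring V" using vr valuation_ring_def by blast
  have C1: "V \<subseteq> localization R p" if pp: "prime_ideal_of R p" "p \<noteq> nonunits R" for p
  proof
    have pM: "p \<subseteq> nonunits R" using prime_sub_nonunits[OF pp(1) sR] .
    obtain t where t: "t \<in> nonunits R" "t \<notin> p" using pM pp(2) by blast
    have tR: "t \<in> R" using t nonunits_def by blast
    have p0: "0 \<in> p" using pp(1) unfolding prime_ideal_of_def ideal_of_def by blast
    have t0: "t \<noteq> 0" using t p0 by blast
    have tV: "t \<in> nonunits V" using t Mm by blast
    have one_np: "1 \<notin> p" using prime_one_notin[OF pp(1) sR] .
    fix v assume vV: "v \<in> V"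
    show "v \<in> localization R p"
    proof (rule ccontr)
      assume nl: "v \<notin> localization R p"
      have v0: "v \<noteq> 0"
      proof
        assume "v = 0"
        then have "v = 0 / 1" by simp
        then show False using nl sub_basic(1,2)[OF sR] one_np unfolding loc_iff by blast
      qed
      show False
      proof (rule engineV[OF sR loc RV sV t(1) dp2])
        fix n
        define y where "y = v * t^n"
        have y0: "y \<noteq> 0" using v0 t0 y_def by simp
        have A: "\<forall>k<n. y * t^k \<notin> R"
        proof (intro allI impI notI)
          fix k assume k: "k < n" "y * t^k \<in> R"
          have "v = (y * t^k) / t^(n+k)" using t0 by (simp add: y_def power_add)
          moreover have "t^(n+k) \<in> R" using sub_pow[OF sR tR] .
          moreover have "t^(n+k) \<notin> p" using prime_pow_notin[OF pp(1) sR tR t(2)] .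
          ultimately show False using nl k(2) unfolding loc_iff by blast
        qed
        have B: "\<forall>k<n. inverse y * t^k \<notin> V"
        proof (intro allI impI notI)
          fix k assume k: "k < n" "inverse y * t^k \<in> V"
          have aV: "v * t^(n-k-1) \<in> V" using sub_basic(5)[OF sV vV] sub_pow[OF sR tR] RV by blast
          have pw: "t * t^(n-k-1) * t^k = t^n"
          proof -
            have "n = Suc (n-k-1) + k" using k(1) by simp
            then show ?thesis by (metis power_Suc power_add)
          qed
          have "t * (v * t^(n-k-1)) * (inverse y * t^k) = 1"
            using pw y0 unfolding y_def
            by (metis (no_types, lifting) ab_semigroup_mult_class.mult_ac(1) mult.commute right_inverse y0 y_def)
          then show False using nonunit_mult[OF sV tV aV k(2)] by blast
        qed
        show "\<exists>y. y \<noteq> 0 \<and> (\<forall>k<n. y * t^k \<notin> R) \<and> (\<forall>k<n. inverse y * t^k \<notin> V)"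
          using y0 A B by blast
      qed
    qed
  qed
  have pRp: "x / s \<in> p" if pp: "prime_ideal_of R p" "p \<noteq> nonunits R" and xs: "x \<in> p" "s \<in> R" "s \<notin> p" for p x s
  proof -
    have pM: "p \<subseteq> nonunits R" using prime_sub_nonunits[OF pp(1) sR] .
    obtain t where t: "t \<in> nonunits R" "t \<notin> p" using pM pp(2) by blast
    have tR: "t \<in> R" using t nonunits_def by blast
    have p0: "0 \<in> p" using pp(1) unfolding prime_ideal_of_def ideal_of_def by blast
    have t0: "t \<noteq> 0" using t p0 by blast
    have s0: "s \<noteq> 0" using xs p0 by blast
    have pR: "p \<subseteq> R" using pp(1) unfolding prime_ideal_of_def ideal_of_def by blast
    have xR: "x \<in> R" using xs pR by blast
    have primeR: "\<And>a b. a \<in> R \<Longrightarrow> b \<in> R \<Longrightarrow> a * b \<in> p \<Longrightarrow> a \<in> p \<or> b \<in> p"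
      using pp(1) unfolding prime_ideal_of_def by blast
    have idR: "\<And>a b. a \<in> R \<Longrightarrow> b \<in> p \<Longrightarrow> a * b \<in> p"
      using pp(1) unfolding prime_ideal_of_def ideal_of_def by blast
    have zR: "x / s \<in> R"
    proof (rule ccontr)
      assume nz: "x / s \<notin> R"
      define z where "z = x / s"
      have x0: "x \<noteq> 0" using nz sub_basic(1)[OF sR] by auto
      have z0: "z \<noteq> 0" using x0 s0 z_def by simp
      show False
      proof (rule engineV[OF sR loc RV sV t(1) dp2])
        fix n
        define y where "y = z * inverse (t^n)"
        have y0: "y \<noteq> 0" using z0 t0 y_def by simp
        have A: "\<forall>k<n. y * t^k \<notin> R"
        proof (intro allI impI notI)
          fix k assume k: "k < n" "y * t^k \<in> R"
          have "t^n = t^k * t^(n-k)" using k(1) by (simp add: power_add[symmetric])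
          then have "z = (y * t^k) * t^(n-k)" using t0 unfolding y_def by (simp add: field_simps)
          then have "z \<in> R" using sub_basic(5)[OF sR k(2) sub_pow[OF sR tR]] by simp
          then show False using nz z_def by simp
        qed
        have B: "\<forall>k<n. inverse y * t^k \<notin> V"
        proof (intro allI impI notI)
          fix k assume k: "k < n" "inverse y * t^k \<in> V"
          then have "inverse y * t^k \<in> localization R p" using C1[OF pp] by blast
          then obtain a \<sigma> where as: "inverse y * t^k = a / \<sigma>" "a \<in> R" "\<sigma> \<in> R" "\<sigma> \<notin> p"
            unfolding loc_iff by blast
          have \<sigma>0: "\<sigma> \<noteq> 0" using as p0 by blast
          have "inverse y * t^k = t^(n+k) * s / x" unfolding y_def z_def using t0 s0 x0
            by (simp add: field_simps power_add)
          then have "t^(n+k) * s / x = a / \<sigma>" using as(1) by simp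
          then have eq: "t^(n+k) * s * \<sigma> = a * x" using x0 \<sigma>0 by (simp add: field_simps)
          have "a * x \<in> p" using idR[OF as(2) xs(1)] .
          moreover have "t^(n+k) * s \<notin> p"
            using primeR[OF sub_pow[OF sR tR] xs(2)] prime_pow_notin[OF pp(1) sR tR t(2)] xs(3) by blast
          moreover have "t^(n+k) * s \<in> R" using sub_basic(5)[OF sR sub_pow[OF sR tR] xs(2)] .
          ultimately show False using primeR[OF _ as(3)] as(4) eq by metis
        qed
        show "\<exists>y. y \<noteq> 0 \<and> (\<forall>k<n. y * t^k \<notin> R) \<and> (\<forall>k<n. inverse y * t^k \<notin> V)"
          using y0 A B by blast
      qed
    qed
    have "s * (x / s) = x" using s0 by simp
    then have "s * (x / s) \<in> p" using xs by simp
    then show ?thesis using primeR[OF xs(2) zR] xs(3) by blast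
  qed
  have C2: "prime_ideal_of V p" if pp: "prime_ideal_of R p" "p \<noteq> nonunits R" for p
  proof -
    have pR: "p \<subseteq> R" using pp(1) unfolding prime_ideal_of_def ideal_of_def by blast
    have idR: "\<And>a b. a \<in> R \<Longrightarrow> b \<in> p \<Longrightarrow> a * b \<in> p"
      using pp(1) unfolding prime_ideal_of_def ideal_of_def by blast
    have primeR: "\<And>a b. a \<in> R \<Longrightarrow> b \<in> R \<Longrightarrow> a * b \<in> p \<Longrightarrow> a \<in> p \<or> b \<in> p"
      using pp(1) unfolding prime_ideal_of_def by blast
    have p0: "0 \<in> p" using pp(1) unfolding prime_ideal_of_def ideal_of_def by blast
    show ?thesis
      unfolding prime_ideal_of_def ideal_of_def
    proof (intro conjI ballI impI)
      show "p \<subseteq> V" using pR RV by blast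
      show "0 \<in> p" using p0 .
    next
      fix x y assume "x \<in> p" "y \<in> p"
      then show "x + y \<in> p" using pp(1) unfolding prime_ideal_of_def ideal_of_def by blast
    next
      fix v x assume vx: "v \<in> V" "x \<in> p"
      have "v \<in> localization R p" using C1[OF pp] vx(1) by blast
      then obtain a s where as: "v = a / s" "a \<in> R" "s \<in> R" "s \<notin> p"
        unfolding loc_iff by blast
      have "v * x = (a * x) / s" using as(1) by simp
      then show "v * x \<in> p" using pRp[OF pp idR[OF as(2) vx(2)] as(3,4)] by simp
    next
      show "p \<noteq> V" using prime_one_notin[OF pp(1) sR] sub_basic(2)[OF sV] by blast
    next
      fix b c assume bc: "b \<in> V" "c \<in> V" "b * c \<in> p"
      obtain b1 s1 where b1: "b = b1 / s1" "b1 \<in> R" "s1 \<in> R" "s1 \<notin> p"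
        using bc(1) C1[OF pp] loc_iff[of b R p] by blast
      obtain c1 s2 where c1: "c = c1 / s2" "c1 \<in> R" "s2 \<in> R" "s2 \<notin> p"
        using bc(2) C1[OF pp] loc_iff[of c R p] by blast
      have s10: "s1 \<noteq> 0" using b1 p0 by blast
      have s20: "s2 \<noteq> 0" using c1 p0 by blast
      have "b1 * c1 = (s1 * s2) * (b * c)" using b1(1) c1(1) s10 s20 by (simp add: field_simps)
      moreover have "s1 * s2 \<in> R" using sub_basic(5)[OF sR b1(3) c1(3)] .
      ultimately have "b1 * c1 \<in> p" using idR bc(3) by simp
      then have "b1 \<in> p \<or> c1 \<in> p" using primeR b1(2) c1(2) by blast
      then show "b \<in> p \<or> c \<in> p" using pRp[OF pp] b1 c1 by auto
    qed
  qed
  have C3: "prime_ideal_of R q" if qq: "prime_ideal_of V q" "q \<subset> nonunits R" for q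
  proof -
    have qM: "q \<subseteq> R" using qq(2) nonunits_def by blast
    have idV: "ideal_of V q" "q \<noteq> V" "\<forall>a\<in>V. \<forall>b\<in>V. a * b \<in> q \<longrightarrow> a \<in> q \<or> b \<in> q"
      using qq(1) unfolding prime_ideal_of_def by auto
    have q1: "0 \<in> q" "\<forall>x\<in>q. \<forall>y\<in>q. x + y \<in> q" "\<forall>s\<in>V. \<forall>x\<in>q. s * x \<in> q"
      using idV(1) unfolding ideal_of_def by auto
    have "1 \<notin> q" using qq(2) one_not_nonunit[OF sR] by blast
    then have qR: "q \<noteq> R" using sub_basic(2)[OF sR] by blast
    show ?thesis
      unfolding prime_ideal_of_def ideal_of_def
    proof (intro conjI ballI impI)
      show "q \<subseteq> R" using qM .
      show "0 \<in> q" using q1(1) .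
      show "q \<noteq> R" using qR .
    next
      fix x y assume "x \<in> q" "y \<in> q" then show "x + y \<in> q" using q1(2) by blast
    next
      fix s x assume "s \<in> R" "x \<in> q" then show "s * x \<in> q" using q1(3) RV by blast
    next
      fix a b assume "a \<in> R" "b \<in> R" "a * b \<in> q" then show "a \<in> q \<or> b \<in> q" using idV(3) RV by blast
    qed
  qed
  show ?thesis using C1 C2 C3 by blast
qed

theorem mainTheorem18:
  fixes R M :: "'K::field set"
  assumes "subring R"
    and "fraction_field_is R"
    and "dp_minimal R (\<lambda>_. {})"
    and "is_local R"
    and "M = nonunits R"
  shows "(\<forall>V m. subring V \<and> R \<subseteq> V \<and> is_local V \<and> m = nonunits V \<and> \<not> M \<subseteq> m
            \<longrightarrow> valuation_ring V \<and> (\<exists>p. prime_ideal_of R p \<and> p \<noteq> M \<and> V = localization R p))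
       \<and> (\<forall>V m. valuation_ring V \<and> R \<subseteq> V \<and> m = nonunits V \<and> M \<subseteq> m
            \<and> dp_minimal UNIV (\<lambda>k. if k = 0 then R else if k = 1 then V else {})
            \<longrightarrow> (\<forall>p. prime_ideal_of R p \<and> p \<noteq> M \<longrightarrow> V \<subseteq> localization R p)
              \<and> (\<forall>p. prime_ideal_of R p \<and> p \<noteq> M \<longrightarrow> prime_ideal_of V p)
              \<and> (\<forall>q. prime_ideal_of V q \<and> q \<subset> M \<longrightarrow> prime_ideal_of R q))"
proof -
  have P1: "\<forall>V m. subring V \<and> R \<subseteq> V \<and> is_local V \<and> m = nonunits V \<and> \<not> M \<subseteq> m
            \<longrightarrow> valuation_ring V \<and> (\<exists>p. prime_ideal_of R p \<and> p \<noteq> M \<and> V = localization R p)"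
  proof (intro allI impI)
    fix V m
    assume h: "subring V \<and> R \<subseteq> V \<and> is_local V \<and> m = nonunits V \<and> \<not> M \<subseteq> m"
    then have "m = nonunits V" "\<not> M \<subseteq> m" by auto
    then have "\<not> nonunits R \<subseteq> nonunits V" using assms(5) by simp
    then show "valuation_ring V \<and> (\<exists>p. prime_ideal_of R p \<and> p \<noteq> M \<and> V = localization R p)"
      using part1[OF assms(1,2,3,4), of V] h assms(5) by simp
  qed
  have P2: "\<forall>V m. valuation_ring V \<and> R \<subseteq> V \<and> m = nonunits V \<and> M \<subseteq> m
            \<and> dp_minimal UNIV (\<lambda>k. if k = 0 then R else if k = 1 then V else {})
            \<longrightarrow> (\<forall>p. prime_ideal_of R p \<and> p \<noteq> M \<longrightarrow> V \<subseteq> localization R p)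
              \<and> (\<forall>p. prime_ideal_of R p \<and> p \<noteq> M \<longrightarrow> prime_ideal_of V p)
              \<and> (\<forall>q. prime_ideal_of V q \<and> q \<subset> M \<longrightarrow> prime_ideal_of R q)"
  proof (intro allI impI)
    fix V m
    assume h: "valuation_ring V \<and> R \<subseteq> V \<and> m = nonunits V \<and> M \<subseteq> m
            \<and> dp_minimal UNIV (\<lambda>k. if k = 0 then R else if k = 1 then V else {})"
    then have "m = nonunits V" "M \<subseteq> m" by auto
    then have "nonunits R \<subseteq> nonunits V" using assms(5) by simp
    then show "(\<forall>p. prime_ideal_of R p \<and> p \<noteq> M \<longrightarrow> V \<subseteq> localization R p)
              \<and> (\<forall>p. prime_ideal_of R p \<and> p \<noteq> M \<longrightarrow> prime_ideal_of V p)
              \<and> (\<forall>q. prime_ideal_of V q \<and> q \<subset> M \<longrightarrow> prime_ideal_of R q)"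
      using part2[OF assms(1,4), of V] h assms(5) by simp
  qed
  show ?thesis using P1 P2 by (rule conjI)
qed

end
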